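(* Let $\mathcal B$ be an extriangulated category with enough injectives. If a subcategory $\mathcal C$ is rigid, closed under direct summands and fully contravariantly finite, then $(\mathcal C,\mathcal C^{\perp_1})$ is a cotorsion pair.
   Context: $(\mathcal B,\mathbb E,\mathfrak s)$ is an extriangulated category (Nakaoka–Palu); conflations $A\rightarrowtail B\twoheadrightarrow C$. Subcategories are full, additive, closed under isomorphisms and finite direct sums. $\mathcal C^{\perp_1}=\{B\mid \mathbb E(\mathcal C,B)=0\}$; $\mathcal C$ is rigid if $\mathbb E(\mathcal C,\mathcal C)=0$. $\mathcal C$ is fully contravariantly finite if every object admits a right $\mathcal C$-approximation which is a deflation. A cotorsion pair $(\mathcal U,\mathcal V)$ is a pair of subcategories closed under direct summands with $\mathbb E(\mathcal U,\mathcal V)=0$ such that every $B$ admits conflations $V_B\rightarrowtail U_B\twoheadrightarrow B$ and $B\rightarrowtail V^B\twoheadrightarrow U^B$ with $U_B,U^B\in\mathcal U$, $V_B,V^B\in\mathcal V$. *)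

theory Defs
  imports Main
begin

section \<open>Extriangulated categories (Nakaoka--Palu), encoded concretely\<close>

text \<open>A category with objects of type 'o and morphisms of type 'm, given by a set of
objects, a set of morphisms with source/target, composition (cmp g f = g o f) and identities.
The bifunctor E is given by a set of extensions of type 'e, each with its two ends:
ext_C d = C and ext_A d = A for d in E(C,A); with group operations and the actions
push a = a_* and pull c = c^*.  real d x y means that the sequence A -x-> B -y-> C
belongs to the equivalence class s(d).\<close>

record ('o, 'm, 'e) excat =
  Obj :: "'o set"
  Arr :: "'m set"
  src :: "'m \<Rightarrow> 'o"
  tgt :: "'m \<Rightarrow> 'o"
  cmp :: "'m \<Rightarrow> 'm \<Rightarrow> 'm"
  idm :: "'o \<Rightarrow> 'm"
  madd :: "'m \<Rightarrow> 'm \<Rightarrow> 'm"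
  mzero :: "'o \<Rightarrow> 'o \<Rightarrow> 'm"
  mneg :: "'m \<Rightarrow> 'm"
  Ext :: "'e set"
  ext_C :: "'e \<Rightarrow> 'o"
  ext_A :: "'e \<Rightarrow> 'o"
  eadd :: "'e \<Rightarrow> 'e \<Rightarrow> 'e"
  ezero :: "'o \<Rightarrow> 'o \<Rightarrow> 'e"
  eneg :: "'e \<Rightarrow> 'e"
  push :: "'m \<Rightarrow> 'e \<Rightarrow> 'e"
  pull :: "'m \<Rightarrow> 'e \<Rightarrow> 'e"
  real :: "'e \<Rightarrow> 'm \<Rightarrow> 'm \<Rightarrow> bool"

definition hom :: "('o,'m,'e) excat \<Rightarrow> 'o \<Rightarrow> 'o \<Rightarrow> 'm set" where
  "hom B X Y = {f \<in> Arr B. src B f = X \<and> tgt B f = Y}"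

definition E :: "('o,'m,'e) excat \<Rightarrow> 'o \<Rightarrow> 'o \<Rightarrow> 'e set" where
  "E B C A = {d \<in> Ext B. ext_C B d = C \<and> ext_A B d = A}"

definition category :: "('o,'m,'e) excat \<Rightarrow> bool" where
  "category B \<longleftrightarrow>
    (\<forall>f\<in>Arr B. src B f \<in> Obj B \<and> tgt B f \<in> Obj B) \<and>
    (\<forall>X\<in>Obj B. idm B X \<in> hom B X X) \<and>
    (\<forall>X Y Z f g. f \<in> hom B X Y \<longrightarrow> g \<in> hom B Y Z \<longrightarrow> cmp B g f \<in> hom B X Z) \<and>
    (\<forall>W X Y Z f g h. f \<in> hom B W X \<longrightarrow> g \<in> hom B X Y \<longrightarrow> h \<in> hom B Y Z \<longrightarrow>
        cmp B h (cmp B g f) = cmp B (cmp B h g) f) \<and>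
    (\<forall>X Y f. f \<in> hom B X Y \<longrightarrow> cmp B f (idm B X) = f \<and> cmp B (idm B Y) f = f)"

definition iso :: "('o,'m,'e) excat \<Rightarrow> 'm \<Rightarrow> bool" where
  "iso B f \<longleftrightarrow> f \<in> Arr B \<and> (\<exists>g \<in> hom B (tgt B f) (src B f).
      cmp B g f = idm B (src B f) \<and> cmp B f g = idm B (tgt B f))"

definition isomorphic :: "('o,'m,'e) excat \<Rightarrow> 'o \<Rightarrow> 'o \<Rightarrow> bool" where
  "isomorphic B X Y \<longleftrightarrow> (\<exists>f \<in> hom B X Y. iso B f)"

definition zero_object :: "('o,'m,'e) excat \<Rightarrow> 'o \<Rightarrow> bool" where
  "zero_object B Z \<longleftrightarrow> Z \<in> Obj B \<and> idm B Z = mzero B Z Z"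

definition biprod :: "('o,'m,'e) excat \<Rightarrow> 'o \<Rightarrow> 'o \<Rightarrow> 'o \<Rightarrow> 'm \<Rightarrow> 'm \<Rightarrow> 'm \<Rightarrow> 'm \<Rightarrow> bool" where
  "biprod B X Y S i1 i2 p1 p2 \<longleftrightarrow>
    S \<in> Obj B \<and> i1 \<in> hom B X S \<and> i2 \<in> hom B Y S \<and> p1 \<in> hom B S X \<and> p2 \<in> hom B S Y \<and>
    cmp B p1 i1 = idm B X \<and> cmp B p2 i2 = idm B Y \<and>
    cmp B p1 i2 = mzero B Y X \<and> cmp B p2 i1 = mzero B X Y \<and>
    madd B (cmp B i1 p1) (cmp B i2 p2) = idm B S"

definition additive_category :: "('o,'m,'e) excat \<Rightarrow> bool" where
  "additive_category B \<longleftrightarrow> category B \<and>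
    (\<forall>X\<in>Obj B. \<forall>Y\<in>Obj B. mzero B X Y \<in> hom B X Y \<and>
       (\<forall>f\<in>hom B X Y. \<forall>g\<in>hom B X Y. madd B f g \<in> hom B X Y) \<and>
       (\<forall>f\<in>hom B X Y. mneg B f \<in> hom B X Y) \<and>
       (\<forall>f\<in>hom B X Y. \<forall>g\<in>hom B X Y. \<forall>h\<in>hom B X Y.
           madd B (madd B f g) h = madd B f (madd B g h)) \<and>
       (\<forall>f\<in>hom B X Y. \<forall>g\<in>hom B X Y. madd B f g = madd B g f) \<and>
       (\<forall>f\<in>hom B X Y. madd B (mzero B X Y) f = f) \<and>
       (\<forall>f\<in>hom B X Y. madd B (mneg B f) f = mzero B X Y)) \<and>
    (\<forall>X Y Z f g h. f \<in> hom B X Y \<longrightarrow> g \<in> hom B X Y \<longrightarrow> h \<in> hom B Y Z \<longrightarrow>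
        cmp B h (madd B f g) = madd B (cmp B h f) (cmp B h g)) \<and>
    (\<forall>W X Y f g h. f \<in> hom B X Y \<longrightarrow> g \<in> hom B X Y \<longrightarrow> h \<in> hom B W X \<longrightarrow>
        cmp B (madd B f g) h = madd B (cmp B f h) (cmp B g h)) \<and>
    (\<exists>Z. zero_object B Z) \<and>
    (\<forall>X\<in>Obj B. \<forall>Y\<in>Obj B. \<exists>S i1 i2 p1 p2. biprod B X Y S i1 i2 p1 p2)"

definition biadditive_functor :: "('o,'m,'e) excat \<Rightarrow> bool" where
  "biadditive_functor B \<longleftrightarrow>
    (\<forall>d\<in>Ext B. ext_C B d \<in> Obj B \<and> ext_A B d \<in> Obj B) \<and>
    (\<forall>C\<in>Obj B. \<forall>A\<in>Obj B. ezero B C A \<in> E B C A \<and>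
       (\<forall>d\<in>E B C A. \<forall>d'\<in>E B C A. eadd B d d' \<in> E B C A) \<and>
       (\<forall>d\<in>E B C A. eneg B d \<in> E B C A) \<and>
       (\<forall>d\<in>E B C A. \<forall>d'\<in>E B C A. \<forall>d''\<in>E B C A.
           eadd B (eadd B d d') d'' = eadd B d (eadd B d' d'')) \<and>
       (\<forall>d\<in>E B C A. \<forall>d'\<in>E B C A. eadd B d d' = eadd B d' d) \<and>
       (\<forall>d\<in>E B C A. eadd B (ezero B C A) d = d) \<and>
       (\<forall>d\<in>E B C A. eadd B (eneg B d) d = ezero B C A)) \<and>
    (\<forall>C A A' a d. a \<in> hom B A A' \<longrightarrow> d \<in> E B C A \<longrightarrow> push B a d \<in> E B C A') \<and>
    (\<forall>C C' A c d. c \<in> hom B C' C \<longrightarrow> d \<in> E B C A \<longrightarrow> pull B c d \<in> E B C' A) \<and>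
    (\<forall>C A d. d \<in> E B C A \<longrightarrow> push B (idm B A) d = d \<and> pull B (idm B C) d = d) \<and>
    (\<forall>C A A' A'' a a' d. a \<in> hom B A A' \<longrightarrow> a' \<in> hom B A' A'' \<longrightarrow> d \<in> E B C A \<longrightarrow>
        push B (cmp B a' a) d = push B a' (push B a d)) \<and>
    (\<forall>C C' C'' A c c' d. c \<in> hom B C' C \<longrightarrow> c' \<in> hom B C'' C' \<longrightarrow> d \<in> E B C A \<longrightarrow>
        pull B (cmp B c c') d = pull B c' (pull B c d)) \<and>
    (\<forall>C C' A A' a c d. a \<in> hom B A A' \<longrightarrow> c \<in> hom B C' C \<longrightarrow> d \<in> E B C A \<longrightarrow>
        push B a (pull B c d) = pull B c (push B a d)) \<and>
    (\<forall>C A A' a d d'. a \<in> hom B A A' \<longrightarrow> d \<in> E B C A \<longrightarrow> d' \<in> E B C A \<longrightarrow>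
        push B a (eadd B d d') = eadd B (push B a d) (push B a d')) \<and>
    (\<forall>C C' A c d d'. c \<in> hom B C' C \<longrightarrow> d \<in> E B C A \<longrightarrow> d' \<in> E B C A \<longrightarrow>
        pull B c (eadd B d d') = eadd B (pull B c d) (pull B c d')) \<and>
    (\<forall>C A A' a a' d. a \<in> hom B A A' \<longrightarrow> a' \<in> hom B A A' \<longrightarrow> d \<in> E B C A \<longrightarrow>
        push B (madd B a a') d = eadd B (push B a d) (push B a' d)) \<and>
    (\<forall>C C' A c c' d. c \<in> hom B C' C \<longrightarrow> c' \<in> hom B C' C \<longrightarrow> d \<in> E B C A \<longrightarrow>
        pull B (madd B c c') d = eadd B (pull B c d) (pull B c' d))"

definition seq_equiv :: "('o,'m,'e) excat \<Rightarrow> 'm \<Rightarrow> 'm \<Rightarrow> 'm \<Rightarrow> 'm \<Rightarrow> bool" where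
  "seq_equiv B x y x' y' \<longleftrightarrow>
    x \<in> Arr B \<and> y \<in> Arr B \<and> x' \<in> Arr B \<and> y' \<in> Arr B \<and>
    tgt B x = src B y \<and> tgt B x' = src B y' \<and>
    src B x = src B x' \<and> tgt B y = tgt B y' \<and>
    (\<exists>b \<in> hom B (tgt B x) (tgt B x'). iso B b \<and> cmp B b x = x' \<and> cmp B y' b = y)"

definition msum :: "('o,'m,'e) excat \<Rightarrow> 'm \<Rightarrow> 'm \<Rightarrow> 'm \<Rightarrow> 'm \<Rightarrow> 'm \<Rightarrow> 'm \<Rightarrow> 'm" where
  "msum B x x' p1 p2 j1 j2 = madd B (cmp B j1 (cmp B x p1)) (cmp B j2 (cmp B x' p2))"

definition additive_realization :: "('o,'m,'e) excat \<Rightarrow> bool" where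
  "additive_realization B \<longleftrightarrow>
    (\<forall>d x y. real B d x y \<longrightarrow> d \<in> Ext B \<and> x \<in> Arr B \<and> y \<in> Arr B \<and>
        src B x = ext_A B d \<and> tgt B x = src B y \<and> tgt B y = ext_C B d) \<and>
    (\<forall>d\<in>Ext B. \<exists>x y. real B d x y) \<and>
    (\<forall>d x y x' y'. real B d x y \<longrightarrow> real B d x' y' \<longrightarrow> seq_equiv B x y x' y') \<and>
    (\<forall>d x y x' y'. real B d x y \<longrightarrow> seq_equiv B x y x' y' \<longrightarrow> real B d x' y') \<and>
    (\<forall>d d' x y x' y' a c.
        real B d x y \<longrightarrow> real B d' x' y' \<longrightarrow>
        a \<in> hom B (ext_A B d) (ext_A B d') \<longrightarrow> c \<in> hom B (ext_C B d) (ext_C B d') \<longrightarrow>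
        push B a d = pull B c d' \<longrightarrow>
        (\<exists>b \<in> hom B (tgt B x) (tgt B x'). cmp B b x = cmp B x' a \<and> cmp B y' b = cmp B c y)) \<and>
    (\<forall>C A S i1 i2 p1 p2. C \<in> Obj B \<longrightarrow> A \<in> Obj B \<longrightarrow> biprod B A C S i1 i2 p1 p2 \<longrightarrow>
        real B (ezero B C A) i1 p2) \<and>
    (\<forall>d d' x y x' y' SA iA1 iA2 pA1 pA2 SB iB1 iB2 pB1 pB2 SC iC1 iC2 pC1 pC2 t.
        real B d x y \<longrightarrow> real B d' x' y' \<longrightarrow>
        biprod B (ext_A B d) (ext_A B d') SA iA1 iA2 pA1 pA2 \<longrightarrow>
        biprod B (tgt B x) (tgt B x') SB iB1 iB2 pB1 pB2 \<longrightarrow>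
        biprod B (ext_C B d) (ext_C B d') SC iC1 iC2 pC1 pC2 \<longrightarrow>
        t \<in> E B SC SA \<longrightarrow>
        push B pA1 (pull B iC1 t) = d \<longrightarrow>
        push B pA1 (pull B iC2 t) = ezero B (ext_C B d') (ext_A B d) \<longrightarrow>
        push B pA2 (pull B iC1 t) = ezero B (ext_C B d) (ext_A B d') \<longrightarrow>
        push B pA2 (pull B iC2 t) = d' \<longrightarrow>
        real B t (msum B x x' pA1 pA2 iB1 iB2) (msum B y y' pB1 pB2 iC1 iC2))"

definition ET3 :: "('o,'m,'e) excat \<Rightarrow> bool" where
  "ET3 B \<longleftrightarrow>
    (\<forall>d d' x y x' y' a b.
        real B d x y \<longrightarrow> real B d' x' y' \<longrightarrow>
        a \<in> hom B (ext_A B d) (ext_A B d') \<longrightarrow> b \<in> hom B (tgt B x) (tgt B x') \<longrightarrow>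
        cmp B b x = cmp B x' a \<longrightarrow>
        (\<exists>c \<in> hom B (ext_C B d) (ext_C B d'). cmp B c y = cmp B y' b \<and> push B a d = pull B c d'))"

definition ET3op :: "('o,'m,'e) excat \<Rightarrow> bool" where
  "ET3op B \<longleftrightarrow>
    (\<forall>d d' x y x' y' b c.
        real B d x y \<longrightarrow> real B d' x' y' \<longrightarrow>
        b \<in> hom B (tgt B x) (tgt B x') \<longrightarrow> c \<in> hom B (ext_C B d) (ext_C B d') \<longrightarrow>
        cmp B y' b = cmp B c y \<longrightarrow>
        (\<exists>a \<in> hom B (ext_A B d) (ext_A B d'). cmp B x' a = cmp B b x \<and> push B a d = pull B c d'))"

definition ET4 :: "('o,'m,'e) excat \<Rightarrow> bool" where
  "ET4 B \<longleftrightarrow>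
    (\<forall>d d' f f' g g'.
        real B d f f' \<longrightarrow> real B d' g g' \<longrightarrow> tgt B f = ext_A B d' \<longrightarrow>
        (\<exists>Eo dm em d'' h'.
            Eo \<in> Obj B \<and>
            dm \<in> hom B (ext_C B d) Eo \<and> em \<in> hom B Eo (ext_C B d') \<and>
            d'' \<in> E B Eo (ext_A B d) \<and> h' \<in> hom B (tgt B g) Eo \<and>
            real B d'' (cmp B g f) h' \<and>
            cmp B h' g = cmp B dm f' \<and> cmp B em h' = g' \<and>
            real B (push B f' d') dm em \<and>
            pull B dm d'' = d \<and> push B f d'' = pull B em d'))"

definition ET4op :: "('o,'m,'e) excat \<Rightarrow> bool" where
  "ET4op B \<longleftrightarrow>
    (\<forall>d d' f f' g g'.
        real B d f' f \<longrightarrow> real B d' g' g \<longrightarrow> tgt B g = src B f \<longrightarrow>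
        (\<exists>Eo dm em d'' h'.
            Eo \<in> Obj B \<and>
            dm \<in> hom B Eo (ext_A B d) \<and> em \<in> hom B (ext_A B d') Eo \<and>
            d'' \<in> E B (ext_C B d) Eo \<and> h' \<in> hom B Eo (src B g) \<and>
            real B d'' h' (cmp B f g) \<and>
            cmp B f' dm = cmp B g h' \<and> cmp B h' em = g' \<and>
            real B (pull B f' d') em dm \<and>
            push B dm d'' = d \<and> pull B f d'' = push B em d'))"

definition extriangulated :: "('o,'m,'e) excat \<Rightarrow> bool" where
  "extriangulated B \<longleftrightarrow> additive_category B \<and> biadditive_functor B \<and>
     additive_realization B \<and> ET3 B \<and> ET3op B \<and> ET4 B \<and> ET4op B"

definition conflation :: "('o,'m,'e) excat \<Rightarrow> 'm \<Rightarrow> 'm \<Rightarrow> bool" where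
  "conflation B x y \<longleftrightarrow> (\<exists>d. real B d x y)"

definition deflation :: "('o,'m,'e) excat \<Rightarrow> 'm \<Rightarrow> bool" where
  "deflation B y \<longleftrightarrow> (\<exists>x. conflation B x y)"

definition injective_obj :: "('o,'m,'e) excat \<Rightarrow> 'o \<Rightarrow> bool" where
  "injective_obj B I \<longleftrightarrow> I \<in> Obj B \<and>
    (\<forall>x y a. conflation B x y \<longrightarrow> a \<in> hom B (src B x) I \<longrightarrow>
        (\<exists>b \<in> hom B (tgt B x) I. cmp B b x = a))"

definition enough_injectives :: "('o,'m,'e) excat \<Rightarrow> bool" where
  "enough_injectives B \<longleftrightarrow>
    (\<forall>X\<in>Obj B. \<exists>x y. conflation B x y \<and> src B x = X \<and> injective_obj B (tgt B x))"

text \<open>Standing convention: subcategories are full, additive, closed under isomorphisms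
and finite direct sums (in particular contain a zero object).\<close>
definition subcategory :: "('o,'m,'e) excat \<Rightarrow> 'o set \<Rightarrow> bool" where
  "subcategory B \<X> \<longleftrightarrow> \<X> \<subseteq> Obj B \<and>
    (\<forall>X Y. X \<in> \<X> \<longrightarrow> isomorphic B X Y \<longrightarrow> Y \<in> \<X>) \<and>
    (\<exists>Z\<in>\<X>. zero_object B Z) \<and>
    (\<forall>X Y S i1 i2 p1 p2. X \<in> \<X> \<longrightarrow> Y \<in> \<X> \<longrightarrow> biprod B X Y S i1 i2 p1 p2 \<longrightarrow> S \<in> \<X>)"

definition closed_under_summands :: "('o,'m,'e) excat \<Rightarrow> 'o set \<Rightarrow> bool" where
  "closed_under_summands B \<X> \<longleftrightarrow>
    (\<forall>X Y S i1 i2 p1 p2. biprod B X Y S i1 i2 p1 p2 \<longrightarrow> S \<in> \<X> \<longrightarrow> X \<in> \<X> \<and> Y \<in> \<X>)"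

definition rigid :: "('o,'m,'e) excat \<Rightarrow> 'o set \<Rightarrow> bool" where
  "rigid B \<X> \<longleftrightarrow> (\<forall>C\<in>\<X>. \<forall>C'\<in>\<X>. E B C C' = {ezero B C C'})"

definition perp1 :: "('o,'m,'e) excat \<Rightarrow> 'o set \<Rightarrow> 'o set" where
  "perp1 B \<X> = {Y \<in> Obj B. \<forall>C\<in>\<X>. E B C Y = {ezero B C Y}}"

definition right_approximation :: "('o,'m,'e) excat \<Rightarrow> 'o set \<Rightarrow> 'm \<Rightarrow> 'o \<Rightarrow> bool" where
  "right_approximation B \<X> f X \<longleftrightarrow> f \<in> Arr B \<and> tgt B f = X \<and> src B f \<in> \<X> \<and>
    (\<forall>C\<in>\<X>. \<forall>g \<in> hom B C X. \<exists>h \<in> hom B C (src B f). cmp B f h = g)"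

definition fully_contravariantly_finite :: "('o,'m,'e) excat \<Rightarrow> 'o set \<Rightarrow> bool" where
  "fully_contravariantly_finite B \<X> \<longleftrightarrow>
    (\<forall>X\<in>Obj B. \<exists>f. right_approximation B \<X> f X \<and> deflation B f)"

definition cotorsion_pair :: "('o,'m,'e) excat \<Rightarrow> 'o set \<Rightarrow> 'o set \<Rightarrow> bool" where
  "cotorsion_pair B \<U> \<V> \<longleftrightarrow>
    subcategory B \<U> \<and> subcategory B \<V> \<and>
    closed_under_summands B \<U> \<and> closed_under_summands B \<V> \<and>
    (\<forall>U\<in>\<U>. \<forall>V\<in>\<V>. E B U V = {ezero B U V}) \<and>
    (\<forall>X\<in>Obj B.
       (\<exists>x y. conflation B x y \<and> tgt B y = X \<and> src B x \<in> \<V> \<and> tgt B x \<in> \<U>) \<and>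
       (\<exists>x y. conflation B x y \<and> src B x = X \<and> tgt B x \<in> \<V> \<and> tgt B y \<in> \<U>))"

end

theory Submission
  imports Defs
begin

locale xc =
  fixes B :: "('o, 'm, 'e) excat"
  assumes ex: "extriangulated B"
begin

lemma add: "additive_category B"
  using ex[unfolded extriangulated_def, THEN conjunct1] by blast
lemma cat: "category B"
  using add[unfolded additive_category_def, THEN conjunct1] by blast
lemma bif: "biadditive_functor B"
  using ex[unfolded extriangulated_def, THEN conjunct2, THEN conjunct1] by blast
lemma ar: "additive_realization B"
  using ex[unfolded extriangulated_def, THEN conjunct2, THEN conjunct2, THEN conjunct1] by blast
lemma et3: "ET3 B"
  using ex[unfolded extriangulated_def, THEN conjunct2, THEN conjunct2, THEN conjunct2, THEN conjunct1] by blast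
lemma et3op: "ET3op B"
  using ex[unfolded extriangulated_def, THEN conjunct2, THEN conjunct2, THEN conjunct2, THEN conjunct2, THEN conjunct1] by blast
lemma et4: "ET4 B"
  using ex[unfolded extriangulated_def, THEN conjunct2, THEN conjunct2, THEN conjunct2, THEN conjunct2, THEN conjunct2, THEN conjunct1] by blast

lemma hom_iff: "f \<in> hom B X Y \<longleftrightarrow> f \<in> Arr B \<and> src B f = X \<and> tgt B f = Y"
  by (simp add: hom_def)
lemma E_iff: "d \<in> E B C A \<longleftrightarrow> d \<in> Ext B \<and> ext_C B d = C \<and> ext_A B d = A"
  by (simp add: E_def)

lemma arr_obj: "f \<in> Arr B \<Longrightarrow> src B f \<in> Obj B \<and> tgt B f \<in> Obj B"
  using cat[unfolded category_def, THEN conjunct1] by blast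
lemma hom_obj: "f \<in> hom B X Y \<Longrightarrow> X \<in> Obj B \<and> Y \<in> Obj B"
  using arr_obj by (auto simp: hom_iff)
lemma id_hom: "X \<in> Obj B \<Longrightarrow> idm B X \<in> hom B X X"
  using cat[unfolded category_def, THEN conjunct2, THEN conjunct1] by blast
lemma cmp_hom: "f \<in> hom B X Y \<Longrightarrow> g \<in> hom B Y Z \<Longrightarrow> cmp B g f \<in> hom B X Z"
  using cat[unfolded category_def, THEN conjunct2, THEN conjunct2, THEN conjunct1] by blast
lemma assoc: "f \<in> hom B W X \<Longrightarrow> g \<in> hom B X Y \<Longrightarrow> h \<in> hom B Y Z \<Longrightarrow>
        cmp B h (cmp B g f) = cmp B (cmp B h g) f"
  using cat[unfolded category_def, THEN conjunct2, THEN conjunct2, THEN conjunct2, THEN conjunct1] by blast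
lemma id_l: "f \<in> hom B X Y \<Longrightarrow> cmp B (idm B Y) f = f"
  using cat[unfolded category_def, THEN conjunct2, THEN conjunct2, THEN conjunct2, THEN conjunct2] by blast
lemma id_r: "f \<in> hom B X Y \<Longrightarrow> cmp B f (idm B X) = f"
  using cat[unfolded category_def, THEN conjunct2, THEN conjunct2, THEN conjunct2, THEN conjunct2] by blast

lemma mzero_hom: "X \<in> Obj B \<Longrightarrow> Y \<in> Obj B \<Longrightarrow> mzero B X Y \<in> hom B X Y"
  using add[unfolded additive_category_def, THEN conjunct2, THEN conjunct1] by blast
lemma madd_zero: "X \<in> Obj B \<Longrightarrow> Y \<in> Obj B \<Longrightarrow> f \<in> hom B X Y \<Longrightarrow> madd B (mzero B X Y) f = f"
  using add[unfolded additive_category_def, THEN conjunct2, THEN conjunct1] by blast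
lemma madd_comm: "X \<in> Obj B \<Longrightarrow> Y \<in> Obj B \<Longrightarrow> f \<in> hom B X Y \<Longrightarrow> g \<in> hom B X Y \<Longrightarrow> madd B f g = madd B g f"
  using add[unfolded additive_category_def, THEN conjunct2, THEN conjunct1] by blast
lemma biprod_ex: "X \<in> Obj B \<Longrightarrow> Y \<in> Obj B \<Longrightarrow> \<exists>S i1 i2 p1 p2. biprod B X Y S i1 i2 p1 p2"
  using add[unfolded additive_category_def, THEN conjunct2, THEN conjunct2, THEN conjunct2, THEN conjunct2, THEN conjunct2] by blast

lemma ext_obj: "d \<in> Ext B \<Longrightarrow> ext_C B d \<in> Obj B \<and> ext_A B d \<in> Obj B"
  using bif[unfolded biadditive_functor_def, THEN conjunct1] by blast
lemma ezero_E: "C \<in> Obj B \<Longrightarrow> A \<in> Obj B \<Longrightarrow> ezero B C A \<in> E B C A"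
  using bif[unfolded biadditive_functor_def, THEN conjunct2, THEN conjunct1] by blast
lemma eadd_E: "C \<in> Obj B \<Longrightarrow> A \<in> Obj B \<Longrightarrow> d \<in> E B C A \<Longrightarrow> d' \<in> E B C A \<Longrightarrow> eadd B d d' \<in> E B C A"
  using bif[unfolded biadditive_functor_def, THEN conjunct2, THEN conjunct1] by blast
lemma eneg_E: "C \<in> Obj B \<Longrightarrow> A \<in> Obj B \<Longrightarrow> d \<in> E B C A \<Longrightarrow> eneg B d \<in> E B C A"
  using bif[unfolded biadditive_functor_def, THEN conjunct2, THEN conjunct1] by blast
lemma eassoc: "C \<in> Obj B \<Longrightarrow> A \<in> Obj B \<Longrightarrow> d \<in> E B C A \<Longrightarrow> d' \<in> E B C A \<Longrightarrow> d'' \<in> E B C A \<Longrightarrow>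
   eadd B (eadd B d d') d'' = eadd B d (eadd B d' d'')"
  using bif[unfolded biadditive_functor_def, THEN conjunct2, THEN conjunct1] by blast
lemma ezero_l: "C \<in> Obj B \<Longrightarrow> A \<in> Obj B \<Longrightarrow> d \<in> E B C A \<Longrightarrow> eadd B (ezero B C A) d = d"
  using bif[unfolded biadditive_functor_def, THEN conjunct2, THEN conjunct1] by blast
lemma eneg_l: "C \<in> Obj B \<Longrightarrow> A \<in> Obj B \<Longrightarrow> d \<in> E B C A \<Longrightarrow> eadd B (eneg B d) d = ezero B C A"
  using bif[unfolded biadditive_functor_def, THEN conjunct2, THEN conjunct1] by blast
lemma push_E: "a \<in> hom B A A' \<Longrightarrow> d \<in> E B C A \<Longrightarrow> push B a d \<in> E B C A'"
  using bif[unfolded biadditive_functor_def, THEN conjunct2, THEN conjunct2, THEN conjunct1] by blast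
lemma pull_E: "c \<in> hom B C' C \<Longrightarrow> d \<in> E B C A \<Longrightarrow> pull B c d \<in> E B C' A"
  using bif[unfolded biadditive_functor_def, THEN conjunct2, THEN conjunct2, THEN conjunct2, THEN conjunct1] by blast
lemma push_id: "d \<in> E B C A \<Longrightarrow> push B (idm B A) d = d"
  using bif[unfolded biadditive_functor_def, THEN conjunct2, THEN conjunct2, THEN conjunct2, THEN conjunct2, THEN conjunct1] by blast
lemma pull_id: "d \<in> E B C A \<Longrightarrow> pull B (idm B C) d = d"
  using bif[unfolded biadditive_functor_def, THEN conjunct2, THEN conjunct2, THEN conjunct2, THEN conjunct2, THEN conjunct1] by blast
lemma push_cmp: "a \<in> hom B A A' \<Longrightarrow> a' \<in> hom B A' A'' \<Longrightarrow> d \<in> E B C A \<Longrightarrow>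
        push B (cmp B a' a) d = push B a' (push B a d)"
  using bif[unfolded biadditive_functor_def, THEN conjunct2, THEN conjunct2, THEN conjunct2, THEN conjunct2, THEN conjunct2, THEN conjunct1] by blast
lemma pull_cmp: "c \<in> hom B C' C \<Longrightarrow> c' \<in> hom B C'' C' \<Longrightarrow> d \<in> E B C A \<Longrightarrow>
        pull B (cmp B c c') d = pull B c' (pull B c d)"
  using bif[unfolded biadditive_functor_def, THEN conjunct2, THEN conjunct2, THEN conjunct2, THEN conjunct2, THEN conjunct2, THEN conjunct2, THEN conjunct1] by blast
lemma push_pull: "a \<in> hom B A A' \<Longrightarrow> c \<in> hom B C' C \<Longrightarrow> d \<in> E B C A \<Longrightarrow>
        push B a (pull B c d) = pull B c (push B a d)"
  using bif[unfolded biadditive_functor_def, THEN conjunct2, THEN conjunct2, THEN conjunct2, THEN conjunct2, THEN conjunct2, THEN conjunct2, THEN conjunct2, THEN conjunct1] by blast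
lemma push_eadd: "a \<in> hom B A A' \<Longrightarrow> d \<in> E B C A \<Longrightarrow> d' \<in> E B C A \<Longrightarrow>
        push B a (eadd B d d') = eadd B (push B a d) (push B a d')"
  using bif[unfolded biadditive_functor_def, THEN conjunct2, THEN conjunct2, THEN conjunct2, THEN conjunct2, THEN conjunct2, THEN conjunct2, THEN conjunct2, THEN conjunct2, THEN conjunct1] by blast
lemma pull_eadd: "c \<in> hom B C' C \<Longrightarrow> d \<in> E B C A \<Longrightarrow> d' \<in> E B C A \<Longrightarrow>
        pull B c (eadd B d d') = eadd B (pull B c d) (pull B c d')"
  using bif[unfolded biadditive_functor_def, THEN conjunct2, THEN conjunct2, THEN conjunct2, THEN conjunct2, THEN conjunct2, THEN conjunct2, THEN conjunct2, THEN conjunct2, THEN conjunct2, THEN conjunct1] by blast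
lemma push_madd: "a \<in> hom B A A' \<Longrightarrow> a' \<in> hom B A A' \<Longrightarrow> d \<in> E B C A \<Longrightarrow>
        push B (madd B a a') d = eadd B (push B a d) (push B a' d)"
  using bif[unfolded biadditive_functor_def, THEN conjunct2, THEN conjunct2, THEN conjunct2, THEN conjunct2, THEN conjunct2, THEN conjunct2, THEN conjunct2, THEN conjunct2, THEN conjunct2, THEN conjunct2, THEN conjunct1] by blast

lemma real_props: "real B d x y \<Longrightarrow> d \<in> Ext B \<and> x \<in> Arr B \<and> y \<in> Arr B \<and>
        src B x = ext_A B d \<and> tgt B x = src B y \<and> tgt B y = ext_C B d"
  using ar[unfolded additive_realization_def, THEN conjunct1] by blast
lemma real_ex: "d \<in> Ext B \<Longrightarrow> \<exists>x y. real B d x y"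
  using ar[unfolded additive_realization_def, THEN conjunct2, THEN conjunct1] by blast
lemma real_equiv: "real B d x y \<Longrightarrow> real B d x' y' \<Longrightarrow> seq_equiv B x y x' y'"
  using ar[unfolded additive_realization_def, THEN conjunct2, THEN conjunct2, THEN conjunct1] by blast
lemma real_morph: "real B d x y \<Longrightarrow> real B d' x' y' \<Longrightarrow>
        a \<in> hom B (ext_A B d) (ext_A B d') \<Longrightarrow> c \<in> hom B (ext_C B d) (ext_C B d') \<Longrightarrow>
        push B a d = pull B c d' \<Longrightarrow>
        (\<exists>b \<in> hom B (tgt B x) (tgt B x'). cmp B b x = cmp B x' a \<and> cmp B y' b = cmp B c y)"
  using ar[unfolded additive_realization_def, THEN conjunct2, THEN conjunct2, THEN conjunct2, THEN conjunct2, THEN conjunct1] by blast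
lemma real_split: "C \<in> Obj B \<Longrightarrow> A \<in> Obj B \<Longrightarrow> biprod B A C S i1 i2 p1 p2 \<Longrightarrow>
        real B (ezero B C A) i1 p2"
  using ar[unfolded additive_realization_def, THEN conjunct2, THEN conjunct2, THEN conjunct2, THEN conjunct2, THEN conjunct2, THEN conjunct1] by blast
lemma ET3': "real B d x y \<Longrightarrow> real B d' x' y' \<Longrightarrow>
        a \<in> hom B (ext_A B d) (ext_A B d') \<Longrightarrow> b \<in> hom B (tgt B x) (tgt B x') \<Longrightarrow>
        cmp B b x = cmp B x' a \<Longrightarrow>
        (\<exists>c \<in> hom B (ext_C B d) (ext_C B d'). cmp B c y = cmp B y' b \<and> push B a d = pull B c d')"
  using et3[unfolded ET3_def] by blast
lemma ET3op': "real B d x y \<Longrightarrow> real B d' x' y' \<Longrightarrow>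
        b \<in> hom B (tgt B x) (tgt B x') \<Longrightarrow> c \<in> hom B (ext_C B d) (ext_C B d') \<Longrightarrow>
        cmp B y' b = cmp B c y \<Longrightarrow>
        (\<exists>a \<in> hom B (ext_A B d) (ext_A B d'). cmp B x' a = cmp B b x \<and> push B a d = pull B c d')"
  using et3op[unfolded ET3op_def] by blast
lemma ET4': "real B d f f' \<Longrightarrow> real B d' g g' \<Longrightarrow> tgt B f = ext_A B d' \<Longrightarrow>
        (\<exists>Eo dm em d'' h'.
            Eo \<in> Obj B \<and>
            dm \<in> hom B (ext_C B d) Eo \<and> em \<in> hom B Eo (ext_C B d') \<and>
            d'' \<in> E B Eo (ext_A B d) \<and> h' \<in> hom B (tgt B g) Eo \<and>
            real B d'' (cmp B g f) h' \<and>
            cmp B h' g = cmp B dm f' \<and> cmp B em h' = g' \<and>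
            real B (push B f' d') dm em \<and>
            pull B dm d'' = d \<and> push B f d'' = pull B em d')"
  using et4[unfolded ET4_def] by blast

lemma E_sing_obj: "E B C A = {z} \<Longrightarrow> C \<in> Obj B"
proof -
  assume a: "E B C A = {z}"
  then have "z \<in> E B C A" by blast
  then show ?thesis using ext_obj by (auto simp: E_iff)
qed

lemma idem_zero:
  assumes "C \<in> Obj B" "A \<in> Obj B" "a \<in> E B C A" "eadd B a a = a"
  shows "a = ezero B C A"
proof -
  have "a = eadd B (eadd B (eneg B a) a) a" using assms by (simp add: eneg_l ezero_l)
  also have "\<dots> = eadd B (eneg B a) (eadd B a a)" using assms by (simp add: eassoc eneg_E)
  also have "\<dots> = ezero B C A" using assms by (simp add: eneg_l)
  finally show ?thesis .
qed

lemma push_zero: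
  assumes "a \<in> hom B A A'" "C \<in> Obj B"
  shows "push B a (ezero B C A) = ezero B C A'"
proof -
  have o: "A \<in> Obj B" "A' \<in> Obj B" using hom_obj assms by auto
  let ?z = "ezero B C A"
  have z: "?z \<in> E B C A" using o assms ezero_E by auto
  have "push B a ?z = push B a (eadd B ?z ?z)" using z o assms by (simp add: ezero_l)
  also have "\<dots> = eadd B (push B a ?z) (push B a ?z)" using push_eadd assms z by blast
  finally show ?thesis using idem_zero o assms push_E z by metis
qed

lemma pull_zero:
  assumes "c \<in> hom B C' C" "A \<in> Obj B"
  shows "pull B c (ezero B C A) = ezero B C' A"
proof -
  have o: "C \<in> Obj B" "C' \<in> Obj B" using hom_obj assms by auto
  let ?z = "ezero B C A"
  have z: "?z \<in> E B C A" using o assms ezero_E by auto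
  have "pull B c ?z = pull B c (eadd B ?z ?z)" using z o assms by (simp add: ezero_l)
  also have "\<dots> = eadd B (pull B c ?z) (pull B c ?z)" using pull_eadd assms z by blast
  finally show ?thesis using idem_zero o assms pull_E z by metis
qed

lemma push_mzero:
  assumes "A \<in> Obj B" "A' \<in> Obj B" "d \<in> E B C A"
  shows "push B (mzero B A A') d = ezero B C A'"
proof -
  have C: "C \<in> Obj B" using assms ext_obj by (auto simp: E_iff)
  have m: "mzero B A A' \<in> hom B A A'" using assms mzero_hom by auto
  have "push B (mzero B A A') d = push B (madd B (mzero B A A') (mzero B A A')) d"
    using madd_zero assms m by simp
  also have "\<dots> = eadd B (push B (mzero B A A') d) (push B (mzero B A A') d)"
    using push_madd m assms by blast
  finally show ?thesis using idem_zero C assms push_E m by metis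
qed

lemma biprod_homs: "biprod B X Y S i1 i2 p1 p2 \<Longrightarrow> i1 \<in> hom B X S \<and> i2 \<in> hom B Y S \<and>
   p1 \<in> hom B S X \<and> p2 \<in> hom B S Y \<and> cmp B p1 i1 = idm B X \<and> cmp B p2 i2 = idm B Y"
  unfolding biprod_def by blast

lemma real_homs:
  assumes r: "real B d x y"
  shows "x \<in> hom B (src B x) (tgt B x)" "y \<in> hom B (tgt B x) (tgt B y)"
    "src B x \<in> Obj B" "tgt B x \<in> Obj B" "tgt B y \<in> Obj B"
    "d \<in> E B (tgt B y) (src B x)" "ext_A B d = src B x" "ext_C B d = tgt B y" "src B y = tgt B x"
  using real_props[OF r] arr_obj[of x] arr_obj[of y] by (auto simp: hom_iff E_iff)

lemma pull_defl_zero: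
  assumes r: "real B \<delta> x y"
  shows "pull B y \<delta> = ezero B (tgt B x) (src B x)"
proof -
  note h = real_homs[OF r]
  obtain S i1 i2 p1 p2 where bp: "biprod B (src B x) (tgt B x) S i1 i2 p1 p2"
    using biprod_ex h by blast
  note bh = biprod_homs[OF bp]
  have rs: "real B (ezero B (tgt B x) (src B x)) i1 p2" using real_split[OF _ _ bp] h by blast
  have zE: "ezero B (tgt B x) (src B x) \<in> E B (tgt B x) (src B x)" using ezero_E h by blast
  have b: "p2 \<in> hom B (tgt B i1) (tgt B x)" using bh by (auto simp: hom_iff)
  have c: "y \<in> hom B (ext_C B (ezero B (tgt B x) (src B x))) (ext_C B \<delta>)" using zE h by (auto simp: E_iff)
  obtain a where a: "a \<in> hom B (ext_A B (ezero B (tgt B x) (src B x))) (ext_A B \<delta>)"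
     and eq: "push B a (ezero B (tgt B x) (src B x)) = pull B y \<delta>"
    using ET3op'[OF rs r b c] by blast
  have a': "a \<in> hom B (src B x) (src B x)" using a zE h by (auto simp: E_iff)
  show ?thesis using eq push_zero[OF a'] h by simp
qed

lemma push_infl_zero:
  assumes r: "real B \<delta> x y"
  shows "push B x \<delta> = ezero B (tgt B y) (tgt B x)"
proof -
  note h = real_homs[OF r]
  obtain S i1 i2 p1 p2 where bp: "biprod B (tgt B x) (tgt B y) S i1 i2 p1 p2"
    using biprod_ex h by blast
  note bh = biprod_homs[OF bp]
  have rs: "real B (ezero B (tgt B y) (tgt B x)) i1 p2" using real_split[OF _ _ bp] h by blast
  have zE: "ezero B (tgt B y) (tgt B x) \<in> E B (tgt B y) (tgt B x)" using ezero_E h by blast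
  have a: "x \<in> hom B (ext_A B \<delta>) (ext_A B (ezero B (tgt B y) (tgt B x)))" using zE h by (auto simp: E_iff)
  have b: "i1 \<in> hom B (tgt B x) (tgt B i1)" using bh by (auto simp: hom_iff)
  obtain c where c: "c \<in> hom B (ext_C B \<delta>) (ext_C B (ezero B (tgt B y) (tgt B x)))"
     and eq: "push B x \<delta> = pull B c (ezero B (tgt B y) (tgt B x))"
    using ET3'[OF r rs a b] by blast
  have c': "c \<in> hom B (tgt B y) (tgt B y)" using c zE h by (auto simp: E_iff)
  show ?thesis using eq pull_zero[OF c'] h by simp
qed

lemma inj_perp:
  assumes I: "injective_obj B I" and C: "C \<in> Obj B"
  shows "E B C I = {ezero B C I}"
proof -
  have IO: "I \<in> Obj B" using I unfolding injective_obj_def by blast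
  have "d = ezero B C I" if d: "d \<in> E B C I" for d
  proof -
    obtain a b where r: "real B d a b" using real_ex[of d] d unfolding E_iff by blast
    note h = real_homs[OF r]
    have sa: "src B a = I" "tgt B b = C" using h d by (auto simp: E_iff)
    have cf: "conflation B a b" unfolding conflation_def using r by blast
    have ih: "idm B I \<in> hom B (src B a) I" using id_hom IO sa by simp
    obtain r' where r': "r' \<in> hom B (tgt B a) I" "cmp B r' a = idm B I"
      using I cf ih unfolding injective_obj_def by blast
    have ah: "a \<in> hom B I (tgt B a)" using h sa by simp
    have "d = push B (idm B I) d" using push_id d by simp
    also have "\<dots> = push B (cmp B r' a) d" using r' by simp
    also have "\<dots> = push B r' (push B a d)" using push_cmp[OF ah r'(1) d] .
    also have "\<dots> = push B r' (ezero B C (tgt B a))" using push_infl_zero[OF r] sa by simp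
    also have "\<dots> = ezero B C I" using push_zero[OF r'(1) C] .
    finally show ?thesis .
  qed
  then show ?thesis using ezero_E[OF C IO] by blast
qed

lemma exact1:
  assumes r: "real B \<delta> x y" and C: "C' \<in> Obj B" and d: "d \<in> E B C' (src B x)"
    and z: "push B x d = ezero B C' (tgt B x)"
  shows "\<exists>c \<in> hom B C' (tgt B y). d = pull B c \<delta>"
proof -
  note h = real_homs[OF r]
  obtain a b where ra: "real B d a b" using real_ex[of d] d unfolding E_iff by blast
  note ha = real_homs[OF ra]
  have sa: "src B a = src B x" "tgt B b = C'" using ha d by (auto simp: E_iff)
  obtain S i1 i2 p1 p2 where bp: "biprod B (tgt B x) C' S i1 i2 p1 p2"
    using biprod_ex h C by blast
  note bh = biprod_homs[OF bp]
  have rs: "real B (ezero B C' (tgt B x)) i1 p2" using real_split[OF _ _ bp] h C by blast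
  have zE: "ezero B C' (tgt B x) \<in> E B C' (tgt B x)" using ezero_E h C by blast
  have xa: "x \<in> hom B (ext_A B d) (ext_A B (ezero B C' (tgt B x)))" using zE h sa ha by (auto simp: E_iff)
  have ic: "idm B C' \<in> hom B (ext_C B d) (ext_C B (ezero B C' (tgt B x)))" using zE id_hom C d by (auto simp: E_iff)
  have eq: "push B x d = pull B (idm B C') (ezero B C' (tgt B x))" using z pull_id zE by simp
  obtain \<beta> where \<beta>: "\<beta> \<in> hom B (tgt B a) (tgt B i1)" "cmp B \<beta> a = cmp B i1 x"
    using real_morph[OF ra rs xa ic eq] by blast
  have \<beta>': "\<beta> \<in> hom B (tgt B a) S" using \<beta> bh by (auto simp: hom_iff)
  define e where "e = cmp B p1 \<beta>"
  have eh: "e \<in> hom B (tgt B a) (tgt B x)" unfolding e_def using cmp_hom \<beta>' bh by blast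
  have ah: "a \<in> hom B (src B x) (tgt B a)" using ha sa by simp
  have p1h: "p1 \<in> hom B S (tgt B x)" and i1h: "i1 \<in> hom B (tgt B x) S" using bh by auto
  have "cmp B e a = cmp B p1 (cmp B \<beta> a)" unfolding e_def using assoc[OF ah \<beta>' p1h] by simp
  also have "\<dots> = cmp B (cmp B p1 i1) x" using \<beta>(2) assoc[OF h(1) i1h p1h] by simp
  also have "\<dots> = x" using bh id_l h by simp
  finally have ea: "cmp B e a = x" .
  have ik: "idm B (src B x) \<in> hom B (ext_A B d) (ext_A B \<delta>)" using id_hom h sa ha by simp
  have eh': "e \<in> hom B (tgt B a) (tgt B x)" using eh .
  have cnd: "cmp B e a = cmp B x (idm B (src B x))" using ea id_r h by simp
  obtain c where c: "c \<in> hom B (ext_C B d) (ext_C B \<delta>)"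
     "push B (idm B (src B x)) d = pull B c \<delta>"
    using ET3'[OF ra r ik eh' cnd] by blast
  have "push B (idm B (src B x)) d = d" using push_id d by simp
  then show ?thesis using c d h sa ha by (auto simp: E_iff)
qed

lemma exact2:
  assumes r: "real B \<epsilon> v w" and e: "e \<in> E B C' (tgt B v)"
    and z: "push B w e = ezero B C' (tgt B w)"
  shows "\<exists>e0 \<in> E B C' (src B v). e = push B v e0"
proof -
  note h = real_homs[OF r]
  have C: "C' \<in> Obj B" using e ext_obj by (auto simp: E_iff)
  obtain a b where ra: "real B e a b" using real_ex[of e] e unfolding E_iff by blast
  note ha = real_homs[OF ra]
  have sa: "src B a = tgt B v" "tgt B b = C'" using ha e by (auto simp: E_iff)
  obtain Eo dm em d'' h' where
     dm: "dm \<in> hom B (ext_C B \<epsilon>) Eo" and em: "em \<in> hom B Eo (ext_C B e)"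
     and d'': "d'' \<in> E B Eo (ext_A B \<epsilon>)"
     and rr: "real B (push B w e) dm em" and pe: "push B v d'' = pull B em e"
    using ET4'[OF r ra] sa ha by metis
  have dm': "dm \<in> hom B (tgt B w) Eo" and em': "em \<in> hom B Eo C'" and d3: "d'' \<in> E B Eo (src B v)"
    using dm em d'' h e by (auto simp: E_iff)
  obtain S i1 i2 p1 p2 where bp: "biprod B (tgt B w) C' S i1 i2 p1 p2"
    using biprod_ex h C by blast
  note bh = biprod_homs[OF bp]
  have rs: "real B (ezero B C' (tgt B w)) i1 p2" using real_split[OF _ _ bp] h C by blast
  have rr': "real B (ezero B C' (tgt B w)) dm em" using rr z by simp
  obtain \<beta> where \<beta>: "\<beta> \<in> hom B (tgt B i1) (tgt B dm)" "cmp B em \<beta> = p2"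
    using real_equiv[OF rs rr'] unfolding seq_equiv_def by blast
  have \<beta>': "\<beta> \<in> hom B S Eo" using \<beta> bh dm' by (auto simp: hom_iff)
  define s where "s = cmp B \<beta> i2"
  have sh: "s \<in> hom B C' Eo" unfolding s_def using cmp_hom \<beta>' bh by blast
  have "cmp B em s = cmp B (cmp B em \<beta>) i2" unfolding s_def using assoc bh \<beta>' em' by blast
  then have es: "cmp B em s = idm B C'" using \<beta> bh by simp
  have "e = pull B (idm B C') e" using pull_id e by simp
  also have "\<dots> = pull B s (pull B em e)" using es pull_cmp[OF em' sh e] by simp
  also have "\<dots> = pull B s (push B v d'')" using pe by simp
  also have "\<dots> = push B v (pull B s d'')" using push_pull[OF _ sh d3] h by simp
  finally show ?thesis using pull_E[OF sh d3] by blast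
qed

lemma perp_iso:
  assumes X: "X \<in> perp1 B \<C>" and i: "isomorphic B X Y"
  shows "Y \<in> perp1 B \<C>"
proof -
  obtain f where f: "f \<in> hom B X Y" "iso B f" using i unfolding isomorphic_def by blast
  obtain g where g: "g \<in> hom B Y X" "cmp B f g = idm B Y"
    using f unfolding iso_def by (auto simp: hom_iff)
  have YO: "Y \<in> Obj B" using hom_obj f by blast
  have XO: "X \<in> Obj B" using hom_obj f by blast
  have "E B C' Y = {ezero B C' Y}" if C': "C' \<in> \<C>" for C'
  proof -
    have EX: "E B C' X = {ezero B C' X}" using X C' unfolding perp1_def by blast
    then have CO: "C' \<in> Obj B" using E_sing_obj by blast
    have "d = ezero B C' Y" if d: "d \<in> E B C' Y" for d
    proof -
      have gd: "push B g d = ezero B C' X" using push_E[OF g(1) d] EX by blast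
      have "d = push B (idm B Y) d" using push_id d by simp
      also have "\<dots> = push B f (push B g d)" using push_cmp[OF g(1) f(1) d] g(2) by simp
      also have "\<dots> = ezero B C' Y" using gd push_zero[OF f(1) CO] by simp
      finally show ?thesis .
    qed
    then show ?thesis using ezero_E[OF CO YO] by blast
  qed
  then show ?thesis using YO unfolding perp1_def by blast
qed

lemma perp_zero:
  assumes CO: "\<C> \<subseteq> Obj B" and Z: "zero_object B Z"
  shows "Z \<in> perp1 B \<C>"
proof -
  have ZO: "Z \<in> Obj B" and zz: "idm B Z = mzero B Z Z" using Z unfolding zero_object_def by auto
  have "E B C' Z = {ezero B C' Z}" if C': "C' \<in> \<C>" for C'
  proof -
    have C'O: "C' \<in> Obj B" using CO C' by blast
    have "d = ezero B C' Z" if d: "d \<in> E B C' Z" for d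
      using push_id[OF d] zz push_mzero[OF ZO ZO d] by simp
    then show ?thesis using ezero_E[OF C'O ZO] by blast
  qed
  then show ?thesis using ZO unfolding perp1_def by blast
qed

lemma perp_sum:
  assumes X: "X \<in> perp1 B \<C>" and Y: "Y \<in> perp1 B \<C>" and bp: "biprod B X Y S i1 i2 p1 p2"
  shows "S \<in> perp1 B \<C>"
proof -
  note bh = biprod_homs[OF bp]
  have sum: "madd B (cmp B i1 p1) (cmp B i2 p2) = idm B S" using bp unfolding biprod_def by blast
  have SO: "S \<in> Obj B" using bp unfolding biprod_def by blast
  have "E B C' S = {ezero B C' S}" if C': "C' \<in> \<C>" for C'
  proof -
    have EX: "E B C' X = {ezero B C' X}" using X C' unfolding perp1_def by blast
    have EY: "E B C' Y = {ezero B C' Y}" using Y C' unfolding perp1_def by blast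
    have CO: "C' \<in> Obj B" using E_sing_obj EX by blast
    have "d = ezero B C' S" if d: "d \<in> E B C' S" for d
    proof -
      have h1: "cmp B i1 p1 \<in> hom B S S" using cmp_hom bh by blast
      have h2: "cmp B i2 p2 \<in> hom B S S" using cmp_hom bh by blast
      have a1: "push B (cmp B i1 p1) d = ezero B C' S"
      proof -
        have "push B p1 d = ezero B C' X" using push_E[of p1 S X d] bh d EX by blast
        then show ?thesis using push_cmp[of p1 S X i1 S d C'] bh d push_zero[of i1 X S C'] CO by simp
      qed
      have a2: "push B (cmp B i2 p2) d = ezero B C' S"
      proof -
        have "push B p2 d = ezero B C' Y" using push_E[of p2 S Y d] bh d EY by blast
        then show ?thesis using push_cmp[of p2 S Y i2 S d C'] bh d push_zero[of i2 Y S C'] CO by simp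
      qed
      have "d = push B (idm B S) d" using push_id d by simp
      also have "\<dots> = eadd B (push B (cmp B i1 p1) d) (push B (cmp B i2 p2) d)"
        using sum push_madd[OF h1 h2 d] by simp
      also have "\<dots> = ezero B C' S" using a1 a2 ezero_l[OF CO SO] ezero_E[OF CO SO] by simp
      finally show ?thesis .
    qed
    then show ?thesis using ezero_E[OF CO SO] by blast
  qed
  then show ?thesis using SO unfolding perp1_def by blast
qed

lemma perp_summand1:
  assumes S: "S \<in> perp1 B \<C>" and bp: "biprod B X Y S i1 i2 p1 p2"
  shows "X \<in> perp1 B \<C>"
proof -
  note bh = biprod_homs[OF bp]
  have XO: "X \<in> Obj B" using bh hom_obj by blast
  have "E B C' X = {ezero B C' X}" if C': "C' \<in> \<C>" for C'
  proof -
    have ES: "E B C' S = {ezero B C' S}" using S C' unfolding perp1_def by blast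
    have CO: "C' \<in> Obj B" using E_sing_obj ES by blast
    have "d = ezero B C' X" if d: "d \<in> E B C' X" for d
    proof -
      have "push B i1 d = ezero B C' S" using push_E[of i1 X S d] bh d ES by blast
      then have "push B (cmp B p1 i1) d = ezero B C' X"
        using push_cmp[of i1 X S p1 X d C'] bh d push_zero[of p1 S X C'] CO by simp
      then show ?thesis using bh push_id[OF d] by simp
    qed
    then show ?thesis using ezero_E[OF CO XO] by blast
  qed
  then show ?thesis using XO unfolding perp1_def by blast
qed

lemma perp_summand2:
  assumes S: "S \<in> perp1 B \<C>" and bp: "biprod B X Y S i1 i2 p1 p2"
  shows "Y \<in> perp1 B \<C>"
proof -
  have bh: "i1 \<in> hom B X S" "i2 \<in> hom B Y S" "p1 \<in> hom B S X" "p2 \<in> hom B S Y" "S \<in> Obj B"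
    using bp unfolding biprod_def by auto
  have "madd B (cmp B i2 p2) (cmp B i1 p1) = madd B (cmp B i1 p1) (cmp B i2 p2)"
    using madd_comm[OF bh(5) bh(5) cmp_hom[OF bh(4) bh(2)] cmp_hom[OF bh(3) bh(1)]] .
  then have "biprod B Y X S i2 i1 p2 p1" using bp unfolding biprod_def by auto
  then show ?thesis using perp_summand1 S by blast
qed

lemma rigid_obj: "rigid B \<C> \<Longrightarrow> C' \<in> \<C> \<Longrightarrow> C' \<in> Obj B"
  unfolding rigid_def using E_sing_obj by blast

lemma seq1:
  assumes rig: "rigid B \<C>" and fcf: "fully_contravariantly_finite B \<C>" and X: "X \<in> Obj B"
  shows "\<exists>x y. conflation B x y \<and> tgt B y = X \<and> src B x \<in> perp1 B \<C> \<and> tgt B x \<in> \<C>"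
proof -
  obtain f where ap: "right_approximation B \<C> f X" and df: "deflation B f"
    using fcf X unfolding fully_contravariantly_finite_def by blast
  obtain x \<delta> where r: "real B \<delta> x f" using df unfolding deflation_def conflation_def by blast
  note h = real_homs[OF r]
  have tf: "tgt B f = X" and C0: "src B f \<in> \<C>" and fa: "f \<in> Arr B" using ap unfolding right_approximation_def by auto
  have K: "src B x \<in> perp1 B \<C>"
  proof -
    have "E B C' (src B x) = {ezero B C' (src B x)}" if C': "C' \<in> \<C>" for C'
    proof -
      have CO: "C' \<in> Obj B" using rigid_obj rig C' by blast
      have "d = ezero B C' (src B x)" if d: "d \<in> E B C' (src B x)" for d
      proof -
        have E0: "E B C' (tgt B x) = {ezero B C' (tgt B x)}" using rig C' C0 h unfolding rigid_def by auto
        have "push B x d \<in> E B C' (tgt B x)" using push_E[OF h(1) d] .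
        then have pz: "push B x d = ezero B C' (tgt B x)" using E0 by blast
        obtain c where c: "c \<in> hom B C' (tgt B f)" "d = pull B c \<delta>" using exact1[OF r CO d pz] by blast
        obtain h' where h': "h' \<in> hom B C' (src B f)" "cmp B f h' = c"
          using ap C' c tf unfolding right_approximation_def by blast
        have h'': "h' \<in> hom B C' (tgt B x)" using h' h by simp
        have "d = pull B (cmp B f h') \<delta>" using c h' by simp
        also have "\<dots> = pull B h' (pull B f \<delta>)" using pull_cmp[OF h(2) h'' h(6)] .
        also have "\<dots> = ezero B C' (src B x)" using pull_defl_zero[OF r] pull_zero[OF h'' h(3)] by simp
        finally show ?thesis .
      qed
      then show ?thesis using ezero_E[OF CO h(3)] by blast
    qed
    then show ?thesis using h(3) unfolding perp1_def by blast
  qed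
  have "conflation B x f" unfolding conflation_def using r by blast
  then show ?thesis using K tf C0 h by metis
qed

lemma seq2:
  assumes ei: "enough_injectives B" and rig: "rigid B \<C>"
    and fcf: "fully_contravariantly_finite B \<C>" and X: "X \<in> Obj B"
  shows "\<exists>x y. conflation B x y \<and> src B x = X \<and> tgt B x \<in> perp1 B \<C> \<and> tgt B y \<in> \<C>"
proof -
  obtain i p where cf: "conflation B i p" and si: "src B i = X" and inj: "injective_obj B (tgt B i)"
    using ei X unfolding enough_injectives_def by blast
  obtain \<delta>1 where r1: "real B \<delta>1 i p" using cf unfolding conflation_def by blast
  note h1 = real_homs[OF r1]
  obtain q where ap: "right_approximation B \<C> q (tgt B p)"
    using fcf h1 unfolding fully_contravariantly_finite_def by blast
  have qh: "q \<in> hom B (src B q) (tgt B p)" and C0: "src B q \<in> \<C>"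
    using ap unfolding right_approximation_def by (auto simp: hom_iff)
  define \<epsilon> where "\<epsilon> = pull B q \<delta>1"
  have eE: "\<epsilon> \<in> E B (src B q) (src B i)" unfolding \<epsilon>_def using pull_E[OF qh h1(6)] .
  obtain v w where r: "real B \<epsilon> v w" using real_ex[of \<epsilon>] eE unfolding E_iff by blast
  note h = real_homs[OF r]
  have sv: "src B v = src B i" and tw: "tgt B w = src B q" using h eE by (auto simp: E_iff)
  have V: "tgt B v \<in> perp1 B \<C>"
  proof -
    have "E B C' (tgt B v) = {ezero B C' (tgt B v)}" if C': "C' \<in> \<C>" for C'
    proof -
      have CO: "C' \<in> Obj B" using rigid_obj rig C' by blast
      have "e = ezero B C' (tgt B v)" if e: "e \<in> E B C' (tgt B v)" for e
      proof -
        have E0: "E B C' (tgt B w) = {ezero B C' (tgt B w)}" using rig C' C0 tw unfolding rigid_def by auto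
        have "push B w e \<in> E B C' (tgt B w)" using push_E[OF h(2) e] .
        then have pz: "push B w e = ezero B C' (tgt B w)" using E0 by blast
        obtain e0 where e0: "e0 \<in> E B C' (src B v)" "e = push B v e0" using exact2[OF r e pz] by blast
        have e0': "e0 \<in> E B C' (src B i)" using e0 sv by simp
        have "push B i e0 \<in> E B C' (tgt B i)" using push_E[OF h1(1) e0'] .
        then have pz1: "push B i e0 = ezero B C' (tgt B i)" using inj_perp[OF inj CO] by blast
        obtain g where g: "g \<in> hom B C' (tgt B p)" "e0 = pull B g \<delta>1" using exact1[OF r1 CO e0' pz1] by blast
        obtain h' where h': "h' \<in> hom B C' (src B q)" "cmp B q h' = g"
          using ap C' g unfolding right_approximation_def by blast
        have "e0 = pull B h' \<epsilon>" unfolding \<epsilon>_def using g h' pull_cmp[OF qh h'(1) h1(6)] by simp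
        then have "e = push B v (pull B h' \<epsilon>)" using e0 by simp
        also have "\<dots> = pull B h' (push B v \<epsilon>)" using push_pull[OF h(1) _ h(6)] h' tw by simp
        also have "\<dots> = ezero B C' (tgt B v)" using push_infl_zero[OF r] pull_zero[of h' C' "tgt B w" "tgt B v"] h' tw h by simp
        finally show ?thesis .
      qed
      then show ?thesis using ezero_E[OF CO h(4)] by blast
    qed
    then show ?thesis using h(4) unfolding perp1_def by blast
  qed
  have "conflation B v w" unfolding conflation_def using r by blast
  then show ?thesis using V sv si tw C0 by metis
qed

end

theorem mainTheorem4:
  fixes B :: "('o, 'm, 'e) excat" and \<C> :: "'o set"
  assumes "extriangulated B"
    and "enough_injectives B"
    and "subcategory B \<C>"
    and "rigid B \<C>"
    and "closed_under_summands B \<C>"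
    and "fully_contravariantly_finite B \<C>"
  shows "cotorsion_pair B \<C> (perp1 B \<C>)"
proof -
  interpret xc B using assms(1) by unfold_locales
  have CO: "\<C> \<subseteq> Obj B" using assms(3) unfolding subcategory_def by blast
  obtain Z where Z: "zero_object B Z" using assms(3) unfolding subcategory_def by blast
  have sp: "subcategory B (perp1 B \<C>)"
    unfolding subcategory_def
  proof (intro conjI allI impI)
    show "perp1 B \<C> \<subseteq> Obj B" unfolding perp1_def by blast
    show "\<exists>Z\<in>perp1 B \<C>. zero_object B Z" using perp_zero[OF CO Z] Z by blast
  next
    fix X Y assume "X \<in> perp1 B \<C>" "isomorphic B X Y"
    then show "Y \<in> perp1 B \<C>" using perp_iso by blast
  next
    fix X Y S i1 i2 p1 p2 assume "X \<in> perp1 B \<C>" "Y \<in> perp1 B \<C>" "biprod B X Y S i1 i2 p1 p2"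
    then show "S \<in> perp1 B \<C>" using perp_sum by blast
  qed
  have cs: "closed_under_summands B (perp1 B \<C>)"
    unfolding closed_under_summands_def using perp_summand1 perp_summand2 by blast
  have orth: "\<forall>U\<in>\<C>. \<forall>V\<in>perp1 B \<C>. E B U V = {ezero B U V}"
    unfolding perp1_def by blast
  have seqs: "\<forall>X\<in>Obj B.
       (\<exists>x y. conflation B x y \<and> tgt B y = X \<and> src B x \<in> perp1 B \<C> \<and> tgt B x \<in> \<C>) \<and>
       (\<exists>x y. conflation B x y \<and> src B x = X \<and> tgt B x \<in> perp1 B \<C> \<and> tgt B y \<in> \<C>)"
    using seq1[OF assms(4) assms(6)] seq2[OF assms(2) assms(4) assms(6)] by blast
  show ?thesis unfolding cotorsion_pair_def using assms(3) assms(5) sp cs orth seqs by blast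
qed

end
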